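(* Let $\Omega\subset\mathbb{R}^n$ be a non-empty bounded open set, let $f:[0,\rho_\Omega]\to\mathbb{R}$ be continuous, and assume that $u(x)=f(d_{\partial\Omega}(x))$ is a viscosity solution of $-\Delta_\infty u=1$ in $\Omega$. Then: (i) $f$ is monotone increasing on $[0,\rho_\Omega]$, i.e. $f(t_1)\le f(t_2)$ whenever $0\le t_1<t_2\le\rho_\Omega$; (ii) the function $v(z)=f(\rho_\Omega-|z|)$ is a viscosity solution of $-\Delta_\infty v=1$ in $B_{\rho_\Omega}(0)\setminus\{0\}$.
   Context: $d_{\partial\Omega}(x)=\min_{y\in\partial\Omega}|x-y|$; $\rho_\Omega=\max_{\overline\Omega}d_{\partial\Omega}$. $\Delta_\infty\varphi=\langle D^2\varphi\,\nabla\varphi,\nabla\varphi\rangle$. For an open set $A$, a function $w\in C^0(A)$ is a viscosity solution of $-\Delta_\infty w=1$ in $A$ if: whenever $\varphi\in C^2(A)$ and $\varphi-w$ has a local minimum at $x_0\in A$, then $-\Delta_\infty\varphi(x_0)\le1$; and whenever $\varphi\in C^2(A)$ and $\varphi-w$ has a local maximum at $x_0\in A$, then $-\Delta_\infty\varphi(x_0)\ge1$. *)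

theory Defs
  imports "HOL-Analysis.Analysis"
begin

definition bdist :: "'a::euclidean_space set \<Rightarrow> 'a \<Rightarrow> real" where
  "bdist \<Omega> x = infdist x (frontier \<Omega>)"

definition inradius :: "'a::euclidean_space set \<Rightarrow> real" where
  "inradius \<Omega> = Sup (bdist \<Omega> ` closure \<Omega>)"

definition grad :: "('a::euclidean_space \<Rightarrow> real) \<Rightarrow> 'a \<Rightarrow> 'a" where
  "grad \<phi> x = (SOME g. (\<phi> has_derivative (\<lambda>h. g \<bullet> h)) (at x))"

definition hess :: "('a::euclidean_space \<Rightarrow> real) \<Rightarrow> 'a \<Rightarrow> 'a \<Rightarrow> 'a" where
  "hess \<phi> x = frechet_derivative (grad \<phi>) (at x)"

definition inf_laplacian :: "('a::euclidean_space \<Rightarrow> real) \<Rightarrow> 'a \<Rightarrow> real" where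
  "inf_laplacian \<phi> x = hess \<phi> x (grad \<phi> x) \<bullet> grad \<phi> x"

definition C2_on :: "'a::euclidean_space set \<Rightarrow> ('a \<Rightarrow> real) \<Rightarrow> bool" where
  "C2_on A \<phi> \<longleftrightarrow>
     (\<forall>x\<in>A. \<phi> differentiable (at x)) \<and>
     (\<forall>x\<in>A. (\<phi> has_derivative (\<lambda>h. grad \<phi> x \<bullet> h)) (at x)) \<and>
     (\<forall>x\<in>A. grad \<phi> differentiable (at x)) \<and>
     continuous_on A (grad \<phi>) \<and>
     (\<forall>v. continuous_on A (\<lambda>x. hess \<phi> x v))"

definition viscosity_solution :: "'a::euclidean_space set \<Rightarrow> ('a \<Rightarrow> real) \<Rightarrow> bool" where
  "viscosity_solution A w \<longleftrightarrow>
     continuous_on A w \<and>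
     (\<forall>\<phi> x0. C2_on A \<phi> \<and> x0 \<in> A \<and>
        (\<exists>e>0. \<forall>y\<in>A \<inter> ball x0 e. \<phi> x0 - w x0 \<le> \<phi> y - w y)
        \<longrightarrow> - inf_laplacian \<phi> x0 \<le> 1) \<and>
     (\<forall>\<phi> x0. C2_on A \<phi> \<and> x0 \<in> A \<and>
        (\<exists>e>0. \<forall>y\<in>A \<inter> ball x0 e. \<phi> y - w y \<le> \<phi> x0 - w x0)
        \<longrightarrow> - inf_laplacian \<phi> x0 \<ge> 1)"

end

theory Submission
  imports Defs
begin

lemma grad_eq:
  fixes \<phi> :: "'a::euclidean_space \<Rightarrow> real"
  assumes "(\<phi> has_derivative (\<lambda>h. g \<bullet> h)) (at x)"
  shows "grad \<phi> x = g"
proof -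
  have "(\<phi> has_derivative (\<lambda>h. grad \<phi> x \<bullet> h)) (at x)"
    unfolding grad_def by (rule someI[of _ g]) (rule assms)
  with assms have "(\<lambda>h. grad \<phi> x \<bullet> h) = (\<lambda>h. g \<bullet> h)"
    using has_derivative_unique by blast
  hence "grad \<phi> x \<bullet> (grad \<phi> x - g) = g \<bullet> (grad \<phi> x - g)" by metis
  hence "(grad \<phi> x - g) \<bullet> (grad \<phi> x - g) = 0" by (simp add: inner_diff_left)
  thus ?thesis by simp
qed

definition qt :: "'a::euclidean_space \<Rightarrow> real \<Rightarrow> real \<Rightarrow> real \<Rightarrow> real \<Rightarrow> 'a \<Rightarrow> real" where
  "qt c A B C N0 x = A + B*((x-c)\<bullet>(x-c) - N0) + C*((x-c)\<bullet>(x-c) - N0)^2"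

definition qal :: "'a::euclidean_space \<Rightarrow> real \<Rightarrow> real \<Rightarrow> real \<Rightarrow> 'a \<Rightarrow> real" where
  "qal c B C N0 x = 2*B + 4*C*((x-c)\<bullet>(x-c) - N0)"

lemma qt_deriv:
  "(qt c A B C N0 has_derivative (\<lambda>h. (qal c B C N0 x *\<^sub>R (x - c)) \<bullet> h)) (at x)"
  unfolding qt_def[abs_def] qal_def
  apply (auto intro!: derivative_eq_intros ext)
  apply (simp add: algebra_simps inner_commute)
  done

lemma qt_grad: "grad (qt c A B C N0) = (\<lambda>x. qal c B C N0 x *\<^sub>R (x - c))"
  by (rule ext, rule grad_eq[OF qt_deriv])

lemma qt_grad_deriv:
  "((\<lambda>x. qal c B C N0 x *\<^sub>R (x - c)) has_derivative
     (\<lambda>v. (8*C*((x-c)\<bullet>v)) *\<^sub>R (x-c) + qal c B C N0 x *\<^sub>R v)) (at x)"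
  unfolding qal_def
  apply (auto intro!: derivative_eq_intros ext)
  apply (simp add: algebra_simps inner_commute)
  done

lemma qt_hess: "hess (qt c A B C N0) x = (\<lambda>v. (8*C*((x-c)\<bullet>v)) *\<^sub>R (x-c) + qal c B C N0 x *\<^sub>R v)"
  unfolding hess_def qt_grad by (rule frechet_derivative_at[OF qt_grad_deriv, symmetric])

lemma qt_C2: "C2_on S (qt c A B C N0)"
proof -
  have "continuous_on S (\<lambda>x. qal c B C N0 x *\<^sub>R (x - c))"
    unfolding qal_def by (intro continuous_intros)
  moreover have "continuous_on S (\<lambda>x. hess (qt c A B C N0) x v)" for v
    unfolding qt_hess qal_def by (intro continuous_intros)
  ultimately show ?thesis
    unfolding C2_on_def qt_grad differentiable_def
    using qt_deriv[of c A B C N0] qt_grad_deriv[of c B C N0] by blast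
qed

lemma qt_lap: "inf_laplacian (qt c A B C N0) x =
   8*C*(qal c B C N0 x)^2*((x-c)\<bullet>(x-c))^2 + (qal c B C N0 x)^3*((x-c)\<bullet>(x-c))"
  unfolding inf_laplacian_def qt_hess qt_grad
  by (simp add: algebra_simps power2_eq_square power3_eq_cube inner_commute)

lemma taylor2:
  fixes k k' :: "real \<Rightarrow> real"
  assumes d0: "d0 > 0"
    and dk: "\<And>t. \<bar>t - r\<bar> < d0 \<Longrightarrow> (k has_real_derivative k' t) (at t)"
    and dk2: "(k' has_real_derivative k2) (at r)"
    and "\<epsilon> > 0"
  shows "\<exists>\<delta>>0. \<forall>t. \<bar>t - r\<bar> < \<delta> \<longrightarrow>
           \<bar>k t - k r - k' r * (t - r) - k2/2 * (t - r)^2\<bar> \<le> \<epsilon> * (t - r)^2"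
proof -
  have "((\<lambda>y. (k' y - k' r) / (y - r)) \<longlongrightarrow> k2) (at r)"
    using dk2 by (simp add: has_field_derivative_iff)
  from LIM_D[OF this \<open>\<epsilon> > 0\<close>] obtain s where s: "s > 0"
    and hs: "\<And>y. y \<noteq> r \<Longrightarrow> norm (y - r) < s \<Longrightarrow> norm ((k' y - k' r) / (y - r) - k2) < \<epsilon>"
    by blast
  have hs2: "\<bar>k' y - k' r - k2 * (y - r)\<bar> \<le> \<epsilon> * \<bar>y - r\<bar>" if "\<bar>y - r\<bar> < s" for y
  proof (cases "y = r")
    case True thus ?thesis by simp
  next
    case False
    hence "\<bar>(k' y - k' r) / (y - r) - k2\<bar> < \<epsilon>" using hs that by auto
    moreover have "(k' y - k' r) / (y - r) - k2 = (k' y - k' r - k2 * (y - r)) / (y - r)"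
      using False by (simp add: field_simps)
    ultimately have "\<bar>k' y - k' r - k2 * (y - r)\<bar> / \<bar>y - r\<bar> < \<epsilon>" by (simp add: abs_divide)
    thus ?thesis using False by (simp add: divide_less_eq less_imp_le)
  qed
  define e where "e t = k t - k' r * t - k2/2 * (t - r)^2" for t
  have de: "(e has_real_derivative (k' t - k' r - k2 * (t - r))) (at t)" if "\<bar>t - r\<bar> < d0" for t
    unfolding e_def[abs_def] using dk[OF that]
    by (auto intro!: derivative_eq_intros simp: power2_eq_square algebra_simps)
  define \<delta> where "\<delta> = min s d0"
  have "\<bar>k t - k r - k' r * (t - r) - k2/2 * (t - r)^2\<bar> \<le> \<epsilon> * (t - r)^2"
    if t: "\<bar>t - r\<bar> < \<delta>" for t
  proof -
    have eq: "k t - k r - k' r * (t - r) - k2/2 * (t - r)^2 = e t - e r"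
      unfolding e_def by (simp add: algebra_simps)
    consider "t = r" | "t < r" | "r < t" by linarith
    thus ?thesis
    proof cases
      case 1 thus ?thesis by simp
    next
      case 2
      have "\<exists>z>t. z < r \<and> e r - e t = (r - t) * (k' z - k' r - k2 * (z - r))"
        apply (rule MVT2[OF 2]) apply (rule de) using t 2 unfolding \<delta>_def by auto
      then obtain z where z: "t < z" "z < r" "e r - e t = (r - t) * (k' z - k' r - k2 * (z - r))" by blast
      have b: "\<bar>k' z - k' r - k2 * (z - r)\<bar> \<le> \<epsilon> * \<bar>z - r\<bar>" apply (rule hs2) using z t unfolding \<delta>_def by auto
      have "\<bar>e t - e r\<bar> = \<bar>r - t\<bar> * \<bar>k' z - k' r - k2 * (z - r)\<bar>" using z(3) by (simp add: abs_mult abs_minus_commute)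
      also have "\<dots> \<le> \<bar>r - t\<bar> * (\<epsilon> * \<bar>z - r\<bar>)" using b by (simp add: mult_left_mono)
      also have "\<dots> \<le> \<bar>r - t\<bar> * (\<epsilon> * \<bar>t - r\<bar>)" using z \<open>\<epsilon> > 0\<close> by (intro mult_left_mono) auto
      also have "\<dots> = \<epsilon> * (t - r)^2" using 2 by (simp add: power2_eq_square algebra_simps)
      finally show ?thesis using eq by simp
    next
      case 3
      have "\<exists>z>r. z < t \<and> e t - e r = (t - r) * (k' z - k' r - k2 * (z - r))"
        apply (rule MVT2[OF 3]) apply (rule de) using t 3 unfolding \<delta>_def by auto
      then obtain z where z: "r < z" "z < t" "e t - e r = (t - r) * (k' z - k' r - k2 * (z - r))" by blast
      have b: "\<bar>k' z - k' r - k2 * (z - r)\<bar> \<le> \<epsilon> * \<bar>z - r\<bar>" apply (rule hs2) using z t unfolding \<delta>_def by auto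
      have "\<bar>e t - e r\<bar> = \<bar>t - r\<bar> * \<bar>k' z - k' r - k2 * (z - r)\<bar>" using z(3) by (simp add: abs_mult)
      also have "\<dots> \<le> \<bar>t - r\<bar> * (\<epsilon> * \<bar>z - r\<bar>)" using b by (simp add: mult_left_mono)
      also have "\<dots> \<le> \<bar>t - r\<bar> * (\<epsilon> * \<bar>t - r\<bar>)" using z \<open>\<epsilon> > 0\<close> by (intro mult_left_mono) auto
      also have "\<dots> = \<epsilon> * (t - r)^2" by (simp add: power2_eq_square flip: abs_mult)
      finally show ?thesis using eq by simp
    qed
  qed
  moreover have "\<delta> > 0" using s d0 unfolding \<delta>_def by simp
  ultimately show ?thesis by blast
qed

lemma radial_grad:
  fixes \<phi> w :: "'a::euclidean_space \<Rightarrow> real"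
  assumes C2: "C2_on P \<phi>" and P: "open P" "z0 \<in> P" "z0 \<noteq> 0"
    and rad: "\<And>z. z \<in> P \<Longrightarrow> norm z = norm z0 \<Longrightarrow> w z = w z0"
    and ext: "(\<exists>e>0. \<forall>y\<in>P \<inter> ball z0 e. \<phi> z0 - w z0 \<le> \<phi> y - w y) \<or>
              (\<exists>e>0. \<forall>y\<in>P \<inter> ball z0 e. \<phi> y - w y \<le> \<phi> z0 - w z0)"
  shows "grad \<phi> z0 = (grad \<phi> z0 \<bullet> (z0 /\<^sub>R norm z0)) *\<^sub>R (z0 /\<^sub>R norm z0)"
proof (rule ccontr)
  assume ne: "\<not> ?thesis"
  define n where "n = norm z0"
  have n: "n > 0" using P unfolding n_def by simp
  define g where "g = grad \<phi> z0"
  define zh where "zh = z0 /\<^sub>R n"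
  define w0 where "w0 = g - (g \<bullet> zh) *\<^sub>R zh"
  have w0: "w0 \<noteq> 0" using ne unfolding w0_def g_def zh_def n_def by simp
  have zz: "z0 \<bullet> z0 = n^2" unfolding n_def by (simp add: power2_norm_eq_inner)
  have z0w0: "z0 \<bullet> w0 = 0"
    unfolding w0_def zh_def using n zz by (simp add: inner_diff_right inner_commute power2_eq_square field_simps)
  define wv where "wv = (n / norm w0) *\<^sub>R w0"
  have z0wv: "z0 \<bullet> wv = 0" unfolding wv_def using z0w0 by simp
  have wvwv: "wv \<bullet> wv = n^2" unfolding wv_def using w0
    by (simp add: power2_norm_eq_inner[symmetric] power2_eq_square)
  have gw0: "g \<bullet> w0 = w0 \<bullet> w0"
  proof -
    have "w0 \<bullet> w0 = (g - (g \<bullet> zh) *\<^sub>R zh) \<bullet> w0" unfolding w0_def ..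
    also have "\<dots> = g \<bullet> w0" using z0w0 unfolding zh_def by (simp add: inner_diff_left)
    finally show ?thesis by simp
  qed
  have gwv: "g \<bullet> wv \<noteq> 0" unfolding wv_def using gw0 w0 n by simp
  define \<gamma> where "\<gamma> \<theta> = cos \<theta> *\<^sub>R z0 + sin \<theta> *\<^sub>R wv" for \<theta>
  have \<gamma>0: "\<gamma> 0 = z0" unfolding \<gamma>_def by simp
  have n\<gamma>: "norm (\<gamma> \<theta>) = n" for \<theta>
  proof -
    have "\<gamma> \<theta> \<bullet> \<gamma> \<theta> = (cos \<theta>)^2 * n^2 + (sin \<theta>)^2 * n^2"
      unfolding \<gamma>_def using zz wvwv z0wv
      by (simp add: inner_add_left inner_add_right inner_commute power2_eq_square)
    also have "\<dots> = n^2" by (simp flip: distrib_right)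
    finally have "norm (\<gamma> \<theta>)^2 = n^2" by (simp add: power2_norm_eq_inner)
    thus ?thesis using n by (simp add: power2_eq_iff_nonneg)
  qed
  have d\<gamma>: "(\<gamma> has_derivative (\<lambda>t. t *\<^sub>R wv)) (at 0)"
    unfolding \<gamma>_def[abs_def] by (auto intro!: derivative_eq_intros)
  have d\<phi>: "(\<phi> has_derivative (\<lambda>h. g \<bullet> h)) (at (\<gamma> 0))"
    using C2 P unfolding C2_on_def g_def \<gamma>0 by blast
  have "((\<phi> \<circ> \<gamma>) has_derivative ((\<lambda>h. g \<bullet> h) \<circ> (\<lambda>t. t *\<^sub>R wv))) (at 0)"
    by (rule diff_chain_at[OF d\<gamma> d\<phi>])
  moreover have "((\<lambda>h. g \<bullet> h) \<circ> (\<lambda>t. t *\<^sub>R wv)) = (*) (g \<bullet> wv)" by (auto simp: o_def)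
  ultimately have D: "((\<lambda>\<theta>. \<phi> (\<gamma> \<theta>) - w z0) has_real_derivative (g \<bullet> wv)) (at 0)"
    unfolding has_field_derivative_def o_def by (auto intro!: derivative_eq_intros)
  have c\<gamma>: "isCont \<gamma> 0" unfolding \<gamma>_def by (intro continuous_intros)
  obtain e1 where e1: "e1 > 0" "ball z0 e1 \<subseteq> P" using P open_contains_ball by blast
  from ext show False
  proof
    assume "\<exists>e>0. \<forall>y\<in>P \<inter> ball z0 e. \<phi> z0 - w z0 \<le> \<phi> y - w y"
    then obtain e where e: "e > 0" "\<forall>y\<in>P \<inter> ball z0 e. \<phi> z0 - w z0 \<le> \<phi> y - w y" by blast
    obtain d where d: "d > 0" "\<forall>x'. dist x' 0 < d \<longrightarrow> dist (\<gamma> x') (\<gamma> 0) < min e e1"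
      using c\<gamma> e e1 unfolding continuous_at_eps_delta by (meson min_less_iff_conj)
    have "\<forall>y. \<bar>0 - y\<bar> < d \<longrightarrow> \<phi> (\<gamma> 0) - w z0 \<le> \<phi> (\<gamma> y) - w z0"
    proof (intro allI impI)
      fix y :: real assume "\<bar>0 - y\<bar> < d"
      hence "dist (\<gamma> y) z0 < min e e1" using d \<gamma>0 by (auto simp: dist_real_def)
      hence "\<gamma> y \<in> P \<inter> ball z0 e" using e1 by (auto simp: dist_commute)
      moreover have "w (\<gamma> y) = w z0" using rad calculation n\<gamma> n_def by auto
      ultimately show "\<phi> (\<gamma> 0) - w z0 \<le> \<phi> (\<gamma> y) - w z0" using e \<gamma>0 by force
    qed
    from DERIV_local_min[OF D d(1) this] show False using gwv by simp
  next
    assume "\<exists>e>0. \<forall>y\<in>P \<inter> ball z0 e. \<phi> y - w y \<le> \<phi> z0 - w z0"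
    then obtain e where e: "e > 0" "\<forall>y\<in>P \<inter> ball z0 e. \<phi> y - w y \<le> \<phi> z0 - w z0" by blast
    obtain d where d: "d > 0" "\<forall>x'. dist x' 0 < d \<longrightarrow> dist (\<gamma> x') (\<gamma> 0) < min e e1"
      using c\<gamma> e e1 unfolding continuous_at_eps_delta by (meson min_less_iff_conj)
    have "\<forall>y. \<bar>0 - y\<bar> < d \<longrightarrow> \<phi> (\<gamma> y) - w z0 \<le> \<phi> (\<gamma> 0) - w z0"
    proof (intro allI impI)
      fix y :: real assume "\<bar>0 - y\<bar> < d"
      hence "dist (\<gamma> y) z0 < min e e1" using d \<gamma>0 by (auto simp: dist_real_def)
      hence "\<gamma> y \<in> P \<inter> ball z0 e" using e1 by (auto simp: dist_commute)
      moreover have "w (\<gamma> y) = w z0" using rad calculation n\<gamma> n_def by auto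
      ultimately show "\<phi> (\<gamma> y) - w z0 \<le> \<phi> (\<gamma> 0) - w z0" using e \<gamma>0 by force
    qed
    from DERIV_local_max[OF D d(1) this] show False using gwv by simp
  qed
qed

lemma lap_radial:
  fixes \<phi> :: "'a::euclidean_space \<Rightarrow> real"
  assumes C2: "C2_on P \<phi>" and P: "z0 \<in> P"
    and g: "grad \<phi> z0 = k1 *\<^sub>R zh"
  shows "inf_laplacian \<phi> z0 = k1^2 * (hess \<phi> z0 zh \<bullet> zh)"
proof -
  have "(grad \<phi> has_derivative hess \<phi> z0) (at z0)"
    using C2 P unfolding C2_on_def hess_def by (simp add: frechet_derivative_works)
  hence lin: "linear (hess \<phi> z0)" using has_derivative_linear by blast
  show ?thesis unfolding inf_laplacian_def g linear_cmul[OF lin]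
    by (simp add: power2_eq_square)
qed

lemma profile_taylor:
  fixes \<phi> :: "'a::euclidean_space \<Rightarrow> real"
  assumes C2: "C2_on P \<phi>" and P: "open P" "z0 \<in> P" "z0 \<noteq> 0" and "\<epsilon> > 0"
  defines "zh \<equiv> z0 /\<^sub>R norm z0"
  shows "\<exists>\<delta>>0. \<forall>t. \<bar>t - norm z0\<bar> < \<delta> \<longrightarrow>
     \<bar>\<phi> (t *\<^sub>R zh) - \<phi> z0 - (grad \<phi> z0 \<bullet> zh) * (t - norm z0)
        - (hess \<phi> z0 zh \<bullet> zh)/2 * (t - norm z0)^2\<bar> \<le> \<epsilon> * (t - norm z0)^2"
proof -
  define r where "r = norm z0"
  have r: "r > 0" using P unfolding r_def by simp
  have rz: "r *\<^sub>R zh = z0" unfolding zh_def r_def using P by simp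
  have nzh: "norm zh = 1" unfolding zh_def using P by simp
  obtain d0 where d0: "d0 > 0" "ball z0 d0 \<subseteq> P" using P open_contains_ball by blast
  have inP: "t *\<^sub>R zh \<in> P" if "\<bar>t - r\<bar> < d0" for t
  proof -
    have "dist z0 (t *\<^sub>R zh) = norm ((r - t) *\<^sub>R zh)"
      unfolding dist_norm rz[symmetric] by (simp add: scaleR_diff_left)
    also have "\<dots> = \<bar>t - r\<bar>" using nzh by simp
    finally show ?thesis using d0 that by auto
  qed
  have dk: "((\<lambda>t. \<phi> (t *\<^sub>R zh)) has_real_derivative (grad \<phi> (t *\<^sub>R zh) \<bullet> zh)) (at t)"
    if "\<bar>t - r\<bar> < d0" for t
  proof -
    have d\<phi>: "(\<phi> has_derivative (\<lambda>h. grad \<phi> (t *\<^sub>R zh) \<bullet> h)) (at ((\<lambda>t. t *\<^sub>R zh) t))"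
      using C2 inP[OF that] unfolding C2_on_def by blast
    have "((\<lambda>t. t *\<^sub>R zh) has_derivative (\<lambda>t. t *\<^sub>R zh)) (at t)"
      by (auto intro!: derivative_eq_intros)
    from diff_chain_at[OF this d\<phi>] show ?thesis
      unfolding has_field_derivative_def o_def by (simp add: mult_commute_abs)
  qed
  have dk2: "((\<lambda>t. grad \<phi> (t *\<^sub>R zh) \<bullet> zh) has_real_derivative (hess \<phi> z0 zh \<bullet> zh)) (at r)"
  proof -
    have dg: "(grad \<phi> has_derivative hess \<phi> z0) (at ((\<lambda>t. t *\<^sub>R zh) r))"
      using C2 P unfolding C2_on_def hess_def rz by (simp add: frechet_derivative_works)
    hence lin: "linear (hess \<phi> z0)" using has_derivative_linear by blast
    have "((\<lambda>t. t *\<^sub>R zh) has_derivative (\<lambda>t. t *\<^sub>R zh)) (at r)"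
      by (auto intro!: derivative_eq_intros)
    from diff_chain_at[OF this dg] have "((\<lambda>t. grad \<phi> (t *\<^sub>R zh)) has_derivative (\<lambda>t. hess \<phi> z0 (t *\<^sub>R zh))) (at r)"
      by (simp add: o_def)
    hence "((\<lambda>t. grad \<phi> (t *\<^sub>R zh) \<bullet> zh) has_derivative (\<lambda>t. hess \<phi> z0 (t *\<^sub>R zh) \<bullet> zh)) (at r)"
      by (auto intro!: derivative_eq_intros)
    thus ?thesis unfolding has_field_derivative_def linear_cmul[OF lin]
      by (simp add: mult_commute_abs)
  qed
  from taylor2[OF d0(1) dk dk2 \<open>\<epsilon> > 0\<close>] show ?thesis
    unfolding r_def[symmetric] using rz by simp
qed

lemma qt_expand:
  fixes x c :: "'a::euclidean_space"
  shows "qt c A B C (s0^2) x = A + 2* s0*B*(norm (x - c) - s0) + (B + 4* s0^2*C)*(norm (x - c) - s0)^2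
      + C*(norm (x - c) - s0)^3*(4* s0 + (norm (x - c) - s0))"
proof -
  have "(x - c) \<bullet> (x - c) = norm (x - c)^2" by (simp add: power2_norm_eq_inner)
  thus ?thesis unfolding qt_def by (simp add: algebra_simps power2_eq_square power3_eq_cube)
qed

lemma qt_at:
  fixes x c :: "'a::euclidean_space"
  assumes "norm (x - c) = s0"
  shows "qt c A B C (s0^2) x = A"
    and "inf_laplacian (qt c A B C (s0^2)) x = 8*C*(2*B)^2*(s0^2)^2 + (2*B)^3* s0^2"
proof -
  have n: "(x - c) \<bullet> (x - c) = s0^2" using assms by (metis power2_norm_eq_inner)
  show "qt c A B C (s0^2) x = A" unfolding qt_def n by simp
  show "inf_laplacian (qt c A B C (s0^2)) x = 8*C*(2*B)^2*(s0^2)^2 + (2*B)^3* s0^2"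
    unfolding qt_lap qal_def n by simp
qed

lemma lap_value:
  fixes s0 k1 K :: real
  assumes "s0 > 0"
  shows "8*((K - k1/(2* s0))/(4* s0^2))*(2*(k1/(2* s0)))^2*(s0^2)^2 + (2*(k1/(2* s0)))^3* s0^2 = 2*k1^2*K"
  using assms by (simp add: field_simps power2_eq_square power3_eq_cube power4_eq_xxxx)

lemma rem_bound:
  fixes h C s0 \<epsilon> :: real
  assumes "s0 > 0" "\<epsilon> > 0" "\<bar>h\<bar> \<le> 1" "\<bar>h\<bar> \<le> \<epsilon> / (2*(\<bar>C\<bar>+1)*(4* s0+1))"
  shows "\<bar>C*h^3*(4* s0 + h)\<bar> \<le> \<epsilon>/2 * h^2"
proof -
  have "\<bar>C*h^3*(4* s0 + h)\<bar> = h^2 * (\<bar>C\<bar> * \<bar>h\<bar> * \<bar>4* s0 + h\<bar>)"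
    by (simp add: abs_mult power2_eq_square power3_eq_cube)
  also have "\<dots> \<le> h^2 * ((\<bar>C\<bar>+1) * (\<epsilon> / (2*(\<bar>C\<bar>+1)*(4* s0+1))) * (4* s0+1))"
    using assms by (intro mult_left_mono mult_mono) auto
  also have "\<dots> = \<epsilon>/2 * h^2"
  proof -
    have p: "\<bar>C\<bar>+1 > 0" "4 * s0+1 > 0" using assms by auto
    have "(\<bar>C\<bar>+1) * (\<epsilon> / (2*(\<bar>C\<bar>+1)*(4 * s0+1))) * (4 * s0+1) = \<epsilon>/2"
    proof -
      have gen: "X * (\<epsilon> / (2*X*Y)) * Y = \<epsilon>/2" if "X > 0" "Y > 0" for X Y :: real
        using that by (simp add: field_simps)
      show ?thesis by (rule gen) (use p in auto)
    qed
    thus ?thesis by simp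
  qed
  finally show ?thesis .
qed

lemma eps_le1:
  fixes a b :: real
  assumes "\<And>\<epsilon>. \<epsilon> > 0 \<Longrightarrow> a - \<epsilon> * b \<le> 1" "b \<ge> 0"
  shows "a \<le> 1"
proof (rule ccontr)
  assume "\<not> a \<le> 1"
  define \<epsilon> where "\<epsilon> = (a - 1) / (2 * (b + 1))"
  have e: "\<epsilon> > 0" using \<open>\<not> a \<le> 1\<close> assms unfolding \<epsilon>_def by simp
  have q: "b / (2 * (b + 1)) < 1" using assms by (simp add: field_simps)
  have "\<epsilon> * b = (a - 1) * (b / (2 * (b + 1)))" unfolding \<epsilon>_def by simp
  also have "\<dots> < (a - 1) * 1" using q \<open>\<not> a \<le> 1\<close> by (intro mult_strict_left_mono) auto
  finally have "\<epsilon> * b < a - 1" by simp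
  with assms(1)[OF e] show False by simp
qed

lemma eps_ge1:
  fixes a b :: real
  assumes "\<And>\<epsilon>. \<epsilon> > 0 \<Longrightarrow> a + \<epsilon> * b \<ge> 1" "b \<ge> 0"
  shows "a \<ge> 1"
proof (rule ccontr)
  assume "\<not> a \<ge> 1"
  define \<epsilon> where "\<epsilon> = (1 - a) / (2 * (b + 1))"
  have e: "\<epsilon> > 0" using \<open>\<not> a \<ge> 1\<close> assms unfolding \<epsilon>_def by simp
  have q: "b / (2 * (b + 1)) < 1" using assms by (simp add: field_simps)
  have "\<epsilon> * b = (1 - a) * (b / (2 * (b + 1)))" unfolding \<epsilon>_def by simp
  also have "\<dots> < (1 - a) * 1" using q \<open>\<not> a \<ge> 1\<close> by (intro mult_strict_left_mono) auto
  finally have "\<epsilon> * b < 1 - a" by simp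
  with assms(1)[OF e] show False by simp
qed

lemma aux_ineq: "-(d::real) \<le> e \<Longrightarrow> c = q + e \<Longrightarrow> a = b + c + d \<Longrightarrow> b + q \<le> a" by linarith
lemma aux_ineq2: "(d::real) \<le> e \<Longrightarrow> c = q - e \<Longrightarrow> a = b + c + d \<Longrightarrow> a \<le> b + q" by linarith

lemma aux3: "(p0::real) = u0 \<Longrightarrow> fs \<le> q \<Longrightarrow> ux \<le> fs \<Longrightarrow> q \<le> px \<Longrightarrow> p0 - u0 \<le> px - ux" by linarith
lemma aux4: "(p0::real) = u0 \<Longrightarrow> q \<le> fs \<Longrightarrow> fs \<le> ux \<Longrightarrow> px \<le> q \<Longrightarrow> px - ux \<le> p0 - u0" by linarith

lemma aux5: "- (a::real) \<le> 1 \<Longrightarrow> a = m \<Longrightarrow> m = b + c \<Longrightarrow> - b - c \<le> 1" by linarith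
lemma aux6: "- (a::real) \<ge> 1 \<Longrightarrow> a = m \<Longrightarrow> m = b - c \<Longrightarrow> - b + c \<ge> 1" by linarith

theorem proposition18:
  fixes \<Omega> :: "'a::euclidean_space set" and f :: "real \<Rightarrow> real"
  assumes "open \<Omega>" and "bounded \<Omega>" and "\<Omega> \<noteq> {}"
    and "continuous_on {0..inradius \<Omega>} f"
    and "viscosity_solution \<Omega> (\<lambda>x. f (bdist \<Omega> x))"
  shows "(\<forall>t1 t2. 0 \<le> t1 \<and> t1 < t2 \<and> t2 \<le> inradius \<Omega> \<longrightarrow> f t1 \<le> f t2)
    \<and> viscosity_solution (ball (0::'a) (inradius \<Omega>) - {0})
        (\<lambda>z. f (inradius \<Omega> - norm z))"
proof -
  note opn = assms(1) and bnd = assms(2) and ne = assms(3) and fc = assms(4)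
  define F where "F = frontier \<Omega>"
  define \<rho> where "\<rho> = inradius \<Omega>"
  define d where "d = bdist \<Omega>"
  define u where "u = (\<lambda>x. f (d x))"
  have dF: "d x = infdist x F" for x unfolding d_def F_def bdist_def by simp
  have Fne: "F \<noteq> {}" unfolding F_def
    using ne bnd not_bounded_UNIV frontier_not_empty by blast
  have Fcl: "closed F" unfolding F_def by simp
  have FO: "x \<in> \<Omega> \<Longrightarrow> x \<notin> F" for x
    unfolding F_def frontier_def using opn interior_open by auto
  have dpos: "x \<in> \<Omega> \<Longrightarrow> d x > 0" for x
    unfolding dF using infdist_pos_not_in_closed[OF Fcl Fne] FO by blast
  have dnn: "d x \<ge> 0" for x unfolding dF by (simp add: infdist_nonneg)
  have dlip: "\<bar>d x - d z\<bar> \<le> dist x z" for x z unfolding dF by (rule infdist_triangle_abs)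
  have dcont: "continuous_on UNIV d"
    unfolding dF by (intro continuous_intros)
  have cc: "compact (closure \<Omega>)" using bnd by (simp add: compact_closure)
  have "compact (d ` closure \<Omega>)"
    using compact_continuous_image[OF continuous_on_subset[OF dcont] cc] by simp
  then obtain m where m: "m \<in> d ` closure \<Omega>" "\<forall>t\<in>d ` closure \<Omega>. t \<le> m"
    using compact_attains_sup ne by (metis closure_eq_empty image_is_empty)
  have \<rho>m: "\<rho> = m" unfolding \<rho>_def inradius_def d_def[symmetric]
    using m by (intro cSup_eq_maximum) auto
  obtain xb where xb: "xb \<in> closure \<Omega>" "d xb = \<rho>" using m \<rho>m by auto
  have dle: "x \<in> \<Omega> \<Longrightarrow> d x \<le> \<rho>" for x using m \<rho>m closure_subset by auto
  have \<rho>pos: "\<rho> > 0"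
  proof -
    obtain x where "x \<in> \<Omega>" using ne by blast
    thus ?thesis using dpos dle by force
  qed
  have xbO: "xb \<in> \<Omega>"
  proof (rule ccontr)
    assume "xb \<notin> \<Omega>"
    hence "xb \<in> F" using xb(1) opn unfolding F_def frontier_def by (simp add: interior_open)
    hence "d xb \<le> 0" unfolding dF using infdist_le2[of xb F xb 0] by simp
    thus False using xb \<rho>pos by simp
  qed
  obtain y where y: "y \<in> F" "d xb = dist xb y"
    using infdist_attains_inf[OF Fcl Fne] unfolding dF by metis
  have dxy: "dist xb y = \<rho>" using y xb by simp
  have lower: "\<rho> - dist z xb \<le> d z" for z
    using infdist_triangle[of xb F z] xb(2) unfolding dF by (simp add: dist_commute)
  have upper: "d z \<le> dist z y" for z
    unfolding dF using infdist_le2[OF y(1), of z "dist z y"] by simp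
  have ballO: "ball xb \<rho> \<subseteq> \<Omega>"
  proof (rule ccontr)
    assume "\<not> ?thesis"
    hence "ball xb \<rho> - \<Omega> \<noteq> {}" by blast
    moreover have "ball xb \<rho> \<inter> \<Omega> \<noteq> {}" using xbO \<rho>pos centre_in_ball by blast
    ultimately have "ball xb \<rho> \<inter> F \<noteq> {}" unfolding F_def
      using connected_Int_frontier[of "ball xb \<rho>" \<Omega>] by auto
    then obtain z where z: "z \<in> F" "dist xb z < \<rho>" by auto
    have "d xb \<le> dist xb z" unfolding dF using infdist_le2[OF z(1)] by simp
    thus False using z xb by simp
  qed
  define p where "p r = xb + (r / \<rho>) *\<^sub>R (y - xb)" for r
  have pprops: "dist (p r) xb = r \<and> dist (p r) y = \<rho> - r \<and> d (p r) = \<rho> - r \<and> p r \<in> \<Omega>"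
    if r: "0 \<le> r" "r < \<rho>" for r
  proof -
    have ny: "norm (y - xb) = \<rho>" using dxy by (simp add: dist_norm norm_minus_commute)
    have 1: "dist (p r) xb = r" unfolding p_def dist_norm using ny r \<rho>pos by simp
    have "y - p r = (1 - r/\<rho>) *\<^sub>R (y - xb)" unfolding p_def by (simp add: algebra_simps)
    hence "dist (p r) y = norm ((1 - r/\<rho>) *\<^sub>R (y - xb))" by (simp add: dist_norm norm_minus_commute)
    also have "\<dots> = \<bar>1 - r/\<rho>\<bar> * \<rho>" using ny by simp
    also have "\<dots> = \<rho> - r" using r \<rho>pos by (simp add: field_simps)
    finally have 2: "dist (p r) y = \<rho> - r" .
    have 3: "d (p r) = \<rho> - r" using lower[of "p r"] upper[of "p r"] 1 2 by simp
    have "p r \<in> ball xb \<rho>" using 1 r by (simp add: dist_commute)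
    thus ?thesis using 1 2 3 ballO by auto
  qed
  have visc: "continuous_on \<Omega> u"
    "\<And>\<phi> x0. C2_on \<Omega> \<phi> \<Longrightarrow> x0 \<in> \<Omega> \<Longrightarrow> (\<exists>e>0. \<forall>y\<in>\<Omega> \<inter> ball x0 e. \<phi> x0 - u x0 \<le> \<phi> y - u y)
        \<Longrightarrow> - inf_laplacian \<phi> x0 \<le> 1"
    "\<And>\<phi> x0. C2_on \<Omega> \<phi> \<Longrightarrow> x0 \<in> \<Omega> \<Longrightarrow> (\<exists>e>0. \<forall>y\<in>\<Omega> \<inter> ball x0 e. \<phi> y - u y \<le> \<phi> x0 - u x0)
        \<Longrightarrow> - inf_laplacian \<phi> x0 \<ge> 1"
    using assms(5) unfolding viscosity_solution_def u_def d_def by blast+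
  have mono_pos: "f t1 \<le> f t" if t: "0 < t1" "t1 \<le> t" "t \<le> \<rho>" for t1 t
  proof -
    have "continuous_on {t1..\<rho>} f" using fc t unfolding \<rho>_def[symmetric]
      by (meson atLeastatMost_subset_iff continuous_on_subset less_imp_le order_refl)
    then obtain s0 where s0: "s0 \<in> {t1..\<rho>}" "\<forall>s\<in>{t1..\<rho>}. f s0 \<le> f s"
      using continuous_attains_inf[of "{t1..\<rho>}" f] t by auto
    show ?thesis
    proof (cases "f t1 \<le> f s0")
      case True thus ?thesis using s0 t by force
    next
      case False
      hence s0t: "s0 > t1" using s0 by (cases "s0 = t1") auto
      define x where "x = p (\<rho> - s0)"
      have x: "d x = s0" "x \<in> \<Omega>" using pprops[of "\<rho> - s0"] s0 s0t t unfolding x_def by auto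
      define \<psi> where "\<psi> = qt x (f s0) 0 0 0"
      have \<psi>: "\<psi> z = f s0" for z unfolding \<psi>_def qt_def by simp
      have "\<forall>z\<in>\<Omega> \<inter> ball x (s0 - t1). \<psi> z - u z \<le> \<psi> x - u x"
      proof
        fix z assume z: "z \<in> \<Omega> \<inter> ball x (s0 - t1)"
        have "d z \<ge> t1" using dlip[of x z] z x by (auto simp: dist_commute)
        moreover have "d z \<le> \<rho>" using dle z by auto
        ultimately have "f s0 \<le> f (d z)" using s0 by auto
        thus "\<psi> z - u z \<le> \<psi> x - u x" unfolding \<psi> u_def using x by simp
      qed
      hence "\<exists>e>0. \<forall>z\<in>\<Omega> \<inter> ball x e. \<psi> z - u z \<le> \<psi> x - u x" using s0t by (intro exI[of _ "s0 - t1"]) auto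
      hence "- inf_laplacian \<psi> x \<ge> 1" using visc(3)[OF qt_C2 x(2)] unfolding \<psi>_def by blast
      moreover have "inf_laplacian \<psi> x = 0" unfolding \<psi>_def qt_lap qal_def by simp
      ultimately show ?thesis by simp
    qed
  qed
  have mono: "f a \<le> f b" if ab: "0 \<le> a" "a \<le> b" "b \<le> \<rho>" for a b
  proof (cases "0 < a")
    case True thus ?thesis using mono_pos ab by blast
  next
    case False
    hence a0: "a = 0" using ab by simp
    show ?thesis
    proof (cases "b = 0")
      case True thus ?thesis using a0 by simp
    next
      case False
      hence b0: "b > 0" using ab by simp
      show ?thesis
      proof (rule ccontr)
        assume "\<not> f a \<le> f b"
        hence e: "f 0 - f b > 0" using a0 by simp
        have "0 \<in> {0..\<rho>}" using \<rho>pos by simp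
        then obtain \<delta> where \<delta>: "\<delta> > 0" "\<forall>x'\<in>{0..\<rho>}. dist x' 0 < \<delta> \<longrightarrow> dist (f x') (f 0) < f 0 - f b"
          using fc e unfolding \<rho>_def[symmetric] continuous_on_iff by blast
        define t where "t = min (\<delta>/2) b"
        have t: "0 < t" "t \<le> b" "t \<in> {0..\<rho>}" "dist t 0 < \<delta>"
          unfolding t_def using \<delta> b0 ab by auto
        have "dist (f t) (f 0) < f 0 - f b" using \<delta> t by blast
        moreover have "f t \<le> f b" using mono_pos[of t b] t ab by simp
        ultimately show False by (simp add: dist_real_def)
      qed
    qed
  qed
  have partI: "\<forall>t1 t2. 0 \<le> t1 \<and> t1 < t2 \<and> t2 \<le> inradius \<Omega> \<longrightarrow> f t1 \<le> f t2"
    using mono unfolding \<rho>_def by auto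
  define P where "P = ball (0::'a) \<rho> - {0}"
  define v where "v z = f (\<rho> - norm z)" for z :: 'a
  have Popen: "open P" unfolding P_def by auto
  have vcont: "continuous_on P v"
  proof -
    have "continuous_on P (\<lambda>z. \<rho> - norm z)" by (intro continuous_intros)
    moreover have "(\<lambda>z. \<rho> - norm z) ` P \<subseteq> {0..\<rho>}" unfolding P_def by auto
    ultimately show ?thesis unfolding v_def
      using continuous_on_compose2[OF fc[unfolded \<rho>_def[symmetric]]] by blast
  qed
  have partII: "viscosity_solution P v"
    unfolding viscosity_solution_def
  proof (intro conjI allI impI)
    show "continuous_on P v" by (rule vcont)
  next
    fix \<phi> z0 assume H: "C2_on P \<phi> \<and> z0 \<in> P \<and> (\<exists>e>0. \<forall>y\<in>P \<inter> ball z0 e. \<phi> z0 - v z0 \<le> \<phi> y - v y)"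
    hence C2: "C2_on P \<phi>" and z0P: "z0 \<in> P" by auto
    from H obtain e where e: "e > 0" "\<forall>y\<in>P \<inter> ball z0 e. \<phi> z0 - v z0 \<le> \<phi> y - v y" by blast
    define r where "r = norm z0"
    have z0ne: "z0 \<noteq> 0" and r: "0 < r" "r < \<rho>" using z0P unfolding P_def r_def by auto
    define zh where "zh = z0 /\<^sub>R norm z0"
    define k1 where "k1 = grad \<phi> z0 \<bullet> zh"
    define k2 where "k2 = hess \<phi> z0 zh \<bullet> zh"
    have nzh: "norm zh = 1" unfolding zh_def using z0ne by simp
    have rzh: "r *\<^sub>R zh = z0" unfolding zh_def r_def using z0ne by simp
    have g: "grad \<phi> z0 = k1 *\<^sub>R zh" unfolding k1_def zh_def
      by (rule radial_grad[OF C2 Popen z0P z0ne, of v]) (use H in \<open>auto simp: v_def\<close>)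
    have lap: "inf_laplacian \<phi> z0 = k1^2 * k2" unfolding k2_def by (rule lap_radial[OF C2 z0P g])
    have vt: "v (t *\<^sub>R zh) = f (\<rho> - t)" if "t > 0" for t unfolding v_def using nzh that by simp
    have dzt: "dist z0 (t *\<^sub>R zh) = \<bar>t - r\<bar>" for t
    proof -
      have "dist z0 (t *\<^sub>R zh) = norm ((r - t) *\<^sub>R zh)"
        unfolding dist_norm rzh[symmetric] by (simp add: scaleR_diff_left)
      thus ?thesis using nzh by simp
    qed
    have "- (k1^2 * k2) - \<epsilon> * (2 * k1^2) \<le> 1" if \<epsilon>: "\<epsilon> > 0" for \<epsilon>
    proof -
      obtain \<delta> where \<delta>: "\<delta> > 0" "\<forall>t. \<bar>t - r\<bar> < \<delta> \<longrightarrow>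
          \<bar>\<phi> (t *\<^sub>R zh) - \<phi> z0 - k1 * (t - r) - k2/2 * (t - r)^2\<bar> \<le> \<epsilon>/2 * (t - r)^2"
        using profile_taylor[OF C2 Popen z0P z0ne, of "\<epsilon>/2"] \<epsilon> unfolding k1_def k2_def zh_def r_def by auto
      define s0 where "s0 = \<rho> - r"
      have s0: "s0 > 0" unfolding s0_def using r by simp
      define B where "B = (- k1) / (2 * s0)"
      define K where "K = k2/2 + \<epsilon>"
      define C where "C = (K - B) / (4 * s0^2)"
      define \<psi> where "\<psi> = qt y (f s0) B C (s0^2)"
      define \<eta> where "\<eta> = min 1 (\<epsilon> / (2*(\<bar>C\<bar>+1)*(4 * s0+1)))"
      define e' where "e' = min (min \<delta> e) (min (min r s0) \<eta>)"
      have e': "e' > 0" unfolding e'_def \<eta>_def using \<delta> e r s0 \<epsilon> by (simp add: add_pos_pos)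
      define x0 where "x0 = p r"
      have x0: "dist x0 y = s0" "d x0 = s0" "x0 \<in> \<Omega>"
        using pprops[of r] r unfolding x0_def s0_def by auto
      have nx0: "norm (x0 - y) = s0" using x0 by (simp add: dist_norm)
      have \<psi>x0: "\<psi> x0 = u x0" unfolding \<psi>_def qt_at(1)[OF nx0] u_def x0 ..
      have "\<forall>x\<in>\<Omega> \<inter> ball x0 e'. \<psi> x0 - u x0 \<le> \<psi> x - u x"
      proof
        fix x assume x: "x \<in> \<Omega> \<inter> ball x0 e'"
        define s where "s = dist x y"
        define h where "h = s - s0"
        have "\<bar>h\<bar> \<le> dist x x0" unfolding h_def s_def x0(1)[symmetric]
          using dist_triangle[of x y x0] dist_triangle[of x0 y x] by (auto simp: dist_commute)
        hence h: "\<bar>h\<bar> < e'" using x by (simp add: dist_commute)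
        define t where "t = \<rho> - s"
        have th: "t - r = - h" unfolding t_def h_def s0_def by simp
        have t: "0 < t" "t < \<rho>" using h th r unfolding e'_def s0_def by auto
        have tP: "t *\<^sub>R zh \<in> P \<inter> ball z0 e"
          using t nzh dzt[of t] th h unfolding P_def e'_def by auto
        have touch: "\<phi> z0 - v z0 \<le> \<phi> (t *\<^sub>R zh) - v (t *\<^sub>R zh)" using e(2) tP by blast
        have vz0: "v z0 = f s0" unfolding v_def s0_def r_def ..
        have vtz: "v (t *\<^sub>R zh) = f s" using vt[OF t(1)] unfolding t_def by simp
        have tay: "\<phi> (t *\<^sub>R zh) - \<phi> z0 - k1 * (t - r) - k2/2 * (t - r)^2 \<le> \<epsilon>/2 * (t - r)^2"
        proof -
          have "\<bar>t - r\<bar> < \<delta>" using th h unfolding e'_def by auto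
          thus ?thesis using \<delta>(2) abs_le_iff by blast
        qed
        have fs: "f s \<le> f s0 - k1 * h + (k2/2 + \<epsilon>/2) * h^2"
          using touch tay vz0 vtz th by (simp add: algebra_simps power2_eq_square)
        have ux: "u x \<le> f s" unfolding u_def
          by (rule mono) (use dnn upper t s_def t_def in auto)
        have hb: "\<bar>h\<bar> \<le> 1" "\<bar>h\<bar> \<le> \<epsilon> / (2*(\<bar>C\<bar>+1)*(4 * s0+1))"
          using h unfolding e'_def \<eta>_def by auto
        have rem: "\<bar>C*h^3*(4 * s0 + h)\<bar> \<le> \<epsilon>/2 * h^2" by (rule rem_bound[OF s0 \<epsilon> hb])
        have "\<psi> x = f s0 + 2 * s0 * B * h + (B + 4 * s0^2 * C) * h^2 + C * h^3 * (4 * s0 + h)"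
          unfolding \<psi>_def qt_expand h_def s_def by (simp add: dist_norm)
        also have "2 * s0 * B = - k1" unfolding B_def using s0 by simp
        also have "B + 4 * s0^2 * C = k2/2 + \<epsilon>" unfolding C_def K_def using s0 by simp
        finally have psx: "\<psi> x = f s0 - k1 * h + (k2/2 + \<epsilon>) * h^2 + C * h^3 * (4 * s0 + h)" by simp
        hence "\<psi> x \<ge> f s0 - k1 * h + (k2/2 + \<epsilon>/2) * h^2" 
        proof -
          have "- (C*h^3*(4 * s0 + h)) \<le> \<epsilon>/2 * h^2" using rem by (simp only: abs_le_iff)
          moreover have "(k2/2 + \<epsilon>) * h^2 = (k2/2 + \<epsilon>/2) * h^2 + \<epsilon>/2 * h^2" by (simp add: algebra_simps)
          ultimately show ?thesis using psx by (rule aux_ineq)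
        qed
        thus "\<psi> x0 - u x0 \<le> \<psi> x - u x" by (rule aux3[OF \<psi>x0 fs ux])
      qed
      hence "- inf_laplacian \<psi> x0 \<le> 1" using visc(2)[OF qt_C2 x0(3)] e' unfolding \<psi>_def by blast
      moreover have "inf_laplacian \<psi> x0 = 2 * (-k1)^2 * K"
        unfolding \<psi>_def qt_at(2)[OF nx0] C_def B_def by (rule lap_value[OF s0])
      moreover have "2 * (-k1)^2 * K = k1^2 * k2 + \<epsilon> * (2 * k1^2)" unfolding K_def by (simp add: algebra_simps)
      ultimately show ?thesis by (rule aux5)
    qed
    note A = this
    have B: "0 \<le> 2 * k1^2" using zero_le_power2[of k1] by linarith
    have "- (k1^2 * k2) \<le> 1" using eps_le1[of "- (k1^2 * k2)" "2 * k1^2"] A B by blast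
    thus "- inf_laplacian \<phi> z0 \<le> 1" using lap by simp
  next
    fix \<phi> z0 assume H: "C2_on P \<phi> \<and> z0 \<in> P \<and> (\<exists>e>0. \<forall>y\<in>P \<inter> ball z0 e. \<phi> y - v y \<le> \<phi> z0 - v z0)"
    hence C2: "C2_on P \<phi>" and z0P: "z0 \<in> P" by auto
    from H obtain e where e: "e > 0" "\<forall>y\<in>P \<inter> ball z0 e. \<phi> y - v y \<le> \<phi> z0 - v z0" by blast
    define r where "r = norm z0"
    have z0ne: "z0 \<noteq> 0" and r: "0 < r" "r < \<rho>" using z0P unfolding P_def r_def by auto
    define zh where "zh = z0 /\<^sub>R norm z0"
    define k1 where "k1 = grad \<phi> z0 \<bullet> zh"
    define k2 where "k2 = hess \<phi> z0 zh \<bullet> zh"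
    have nzh: "norm zh = 1" unfolding zh_def using z0ne by simp
    have rzh: "r *\<^sub>R zh = z0" unfolding zh_def r_def using z0ne by simp
    have g: "grad \<phi> z0 = k1 *\<^sub>R zh" unfolding k1_def zh_def
      by (rule radial_grad[OF C2 Popen z0P z0ne, of v]) (use H in \<open>auto simp: v_def\<close>)
    have lap: "inf_laplacian \<phi> z0 = k1^2 * k2" unfolding k2_def by (rule lap_radial[OF C2 z0P g])
    have vt: "v (t *\<^sub>R zh) = f (\<rho> - t)" if "t > 0" for t unfolding v_def using nzh that by simp
    have dzt: "dist z0 (t *\<^sub>R zh) = \<bar>t - r\<bar>" for t
    proof -
      have "dist z0 (t *\<^sub>R zh) = norm ((r - t) *\<^sub>R zh)"
        unfolding dist_norm rzh[symmetric] by (simp add: scaleR_diff_left)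
      thus ?thesis using nzh by simp
    qed
    have "- (k1^2 * k2) + \<epsilon> * (2 * k1^2) \<ge> 1" if \<epsilon>: "\<epsilon> > 0" for \<epsilon>
    proof -
      obtain \<delta> where \<delta>: "\<delta> > 0" "\<forall>t. \<bar>t - r\<bar> < \<delta> \<longrightarrow>
          \<bar>\<phi> (t *\<^sub>R zh) - \<phi> z0 - k1 * (t - r) - k2/2 * (t - r)^2\<bar> \<le> \<epsilon>/2 * (t - r)^2"
        using profile_taylor[OF C2 Popen z0P z0ne, of "\<epsilon>/2"] \<epsilon> unfolding k1_def k2_def zh_def r_def by auto
      define B where "B = k1 / (2 * r)"
      define K where "K = k2/2 - \<epsilon>"
      define C where "C = (K - B) / (4 * r^2)"
      define \<psi> where "\<psi> = qt xb (f (\<rho> - r)) B C (r^2)"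
      define \<eta> where "\<eta> = min 1 (\<epsilon> / (2*(\<bar>C\<bar>+1)*(4 * r+1)))"
      define e' where "e' = min (min \<delta> e) (min (min r (\<rho> - r)) \<eta>)"
      have e': "e' > 0" unfolding e'_def \<eta>_def using \<delta> e r \<epsilon> by (simp add: add_pos_pos)
      define x0 where "x0 = p r"
      have x0: "dist x0 xb = r" "d x0 = \<rho> - r" "x0 \<in> \<Omega>"
        using pprops[of r] r unfolding x0_def by auto
      have nx0: "norm (x0 - xb) = r" using x0 by (simp add: dist_norm)
      have \<psi>x0: "\<psi> x0 = u x0" unfolding \<psi>_def qt_at(1)[OF nx0] u_def x0 ..
      have "\<forall>x\<in>\<Omega> \<inter> ball x0 e'. \<psi> x - u x \<le> \<psi> x0 - u x0"
      proof
        fix x assume x: "x \<in> \<Omega> \<inter> ball x0 e'"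
        define t where "t = dist x xb"
        define h where "h = t - r"
        have "\<bar>h\<bar> \<le> dist x x0" unfolding h_def t_def x0(1)[symmetric]
          using dist_triangle[of x xb x0] dist_triangle[of x0 xb x] by (auto simp: dist_commute)
        hence h: "\<bar>h\<bar> < e'" using x by (simp add: dist_commute)
        have t: "0 < t" "t < \<rho>" using h r unfolding e'_def h_def by auto
        have tP: "t *\<^sub>R zh \<in> P \<inter> ball z0 e"
          using t nzh dzt[of t] h unfolding P_def e'_def h_def by auto
        have touch: "\<phi> (t *\<^sub>R zh) - v (t *\<^sub>R zh) \<le> \<phi> z0 - v z0" using e(2) tP by blast
        have vz0: "v z0 = f (\<rho> - r)" unfolding v_def r_def ..
        have vtz: "v (t *\<^sub>R zh) = f (\<rho> - t)" using vt[OF t(1)] .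
        have tay: "\<phi> (t *\<^sub>R zh) - \<phi> z0 - k1 * (t - r) - k2/2 * (t - r)^2 \<ge> - (\<epsilon>/2 * (t - r)^2)"
        proof -
          have "\<bar>t - r\<bar> < \<delta>" using h unfolding e'_def h_def by auto
          thus ?thesis using \<delta>(2) abs_le_iff by (metis minus_le_iff)
        qed
        have fs: "f (\<rho> - t) \<ge> f (\<rho> - r) + k1 * h + (k2/2 - \<epsilon>/2) * h^2"
          using touch tay vz0 vtz unfolding h_def by (simp add: algebra_simps power2_eq_square)
        have ux: "f (\<rho> - t) \<le> u x" unfolding u_def
          by (rule mono) (use dle lower x t t_def in auto)
        have hb: "\<bar>h\<bar> \<le> 1" "\<bar>h\<bar> \<le> \<epsilon> / (2*(\<bar>C\<bar>+1)*(4 * r+1))"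
          using h unfolding e'_def \<eta>_def by auto
        have rem: "\<bar>C*h^3*(4 * r + h)\<bar> \<le> \<epsilon>/2 * h^2" by (rule rem_bound[OF r(1) \<epsilon> hb])
        have "\<psi> x = f (\<rho> - r) + 2 * r * B * h + (B + 4 * r^2 * C) * h^2 + C * h^3 * (4 * r + h)"
          unfolding \<psi>_def qt_expand h_def t_def by (simp add: dist_norm)
        also have "2 * r * B = k1" unfolding B_def using r by simp
        also have "B + 4 * r^2 * C = k2/2 - \<epsilon>" unfolding C_def K_def using r by simp
        finally have psx: "\<psi> x = f (\<rho> - r) + k1 * h + (k2/2 - \<epsilon>) * h^2 + C * h^3 * (4 * r + h)" by simp
        hence "\<psi> x \<le> f (\<rho> - r) + k1 * h + (k2/2 - \<epsilon>/2) * h^2" 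
        proof -
          have "C*h^3*(4 * r + h) \<le> \<epsilon>/2 * h^2" using rem by (simp only: abs_le_iff)
          moreover have "(k2/2 - \<epsilon>) * h^2 = (k2/2 - \<epsilon>/2) * h^2 - \<epsilon>/2 * h^2" by (simp add: algebra_simps)
          ultimately show ?thesis using psx by (rule aux_ineq2)
        qed
        thus "\<psi> x - u x \<le> \<psi> x0 - u x0" by (rule aux4[OF \<psi>x0 fs ux])
      qed
      hence "- inf_laplacian \<psi> x0 \<ge> 1" using visc(3)[OF qt_C2 x0(3)] e' unfolding \<psi>_def by blast
      moreover have "inf_laplacian \<psi> x0 = 2 * k1^2 * K"
        unfolding \<psi>_def qt_at(2)[OF nx0] C_def B_def by (rule lap_value[OF r(1)])
      moreover have "2 * k1^2 * K = k1^2 * k2 - \<epsilon> * (2 * k1^2)" unfolding K_def by (simp add: algebra_simps)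
      ultimately show ?thesis by (rule aux6)
    qed
    note A = this
    have B: "0 \<le> 2 * k1^2" using zero_le_power2[of k1] by linarith
    have "- (k1^2 * k2) \<ge> 1" using eps_ge1[of "- (k1^2 * k2)" "2 * k1^2"] A B by blast
    thus "- inf_laplacian \<phi> z0 \<ge> 1" using lap by simp
  qed
  show ?thesis using partI partII unfolding P_def v_def \<rho>_def by simp
qed

end
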